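(* The half line $\mathbb R_+=[0,\infty)$ (with the standard metric) is an absolute extensor in the category $\mathcal A$ and in the category $\tilde{\mathcal A}$.
   Context: A metric space is proper if all closed balls are compact; a map is proper if preimages of compact sets are compact; a map $f:X\to Y$ of metric spaces is asymptotically Lipschitz if there are $\lambda,s\ge0$ with $d_Y(f(x),f(x'))\le\lambda d_X(x,x')+s$ for all $x,x'$. The category $\mathcal A$ has proper metric spaces as objects and continuous proper asymptotically Lipschitz maps as morphisms. The category $\tilde{\mathcal A}$ has the same objects; its morphisms are morphisms $f:X\to Y$ of $\mathcal A$ with nonzero norm, meaning: for base points $x_0\in X$, $y_0\in Y$ there exist $c>0$, $b\ge0$ with $d_Y(f(x),y_0)\ge c\,d_X(x,x_0)-b$ for all $x\in X$ (this does not depend on the base points). An object $Y$ is an absolute extensor in such a category if for every object $X$, every closed subset $A\subset X$ with the induced metric, and every morphism $\phi:A\to Y$, there is a morphism $\bar\phi:X\to Y$ with $\bar\phi|_A=\phi$. *)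

theory Defs
  imports "HOL-Analysis.Analysis"
begin

definition proper_metric :: "'a metric \<Rightarrow> bool" where
  "proper_metric X \<longleftrightarrow>
     (\<forall>x\<in>mspace X. \<forall>r::real. compactin (mtopology_of X) (mcball_of X x r))"

definition proper_metric_map :: "'a metric \<Rightarrow> 'b metric \<Rightarrow> ('a \<Rightarrow> 'b) \<Rightarrow> bool" where
  "proper_metric_map X Y f \<longleftrightarrow>
     (\<forall>K. compactin (mtopology_of Y) K \<longrightarrow>
          compactin (mtopology_of X) {x \<in> mspace X. f x \<in> K})"

definition asymp_lipschitz :: "'a metric \<Rightarrow> 'b metric \<Rightarrow> ('a \<Rightarrow> 'b) \<Rightarrow> bool" where
  "asymp_lipschitz X Y f \<longleftrightarrow>
     (\<exists>L s. L \<ge> 0 \<and> s \<ge> 0 \<and>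
        (\<forall>x\<in>mspace X. \<forall>x'\<in>mspace X. mdist Y (f x) (f x') \<le> L * mdist X x x' + s))"

definition morA :: "'a metric \<Rightarrow> 'b metric \<Rightarrow> ('a \<Rightarrow> 'b) \<Rightarrow> bool" where
  "morA X Y f \<longleftrightarrow> continuous_map (mtopology_of X) (mtopology_of Y) f
                 \<and> proper_metric_map X Y f \<and> asymp_lipschitz X Y f"

text \<open>Nonzero norm (required for all base points; independent of the choice).\<close>
definition nonzero_norm :: "'a metric \<Rightarrow> 'b metric \<Rightarrow> ('a \<Rightarrow> 'b) \<Rightarrow> bool" where
  "nonzero_norm X Y f \<longleftrightarrow>
     (\<forall>x0\<in>mspace X. \<forall>y0\<in>mspace Y. \<exists>c b. c > 0 \<and> b \<ge> 0 \<and>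
        (\<forall>x\<in>mspace X. mdist Y (f x) y0 \<ge> c * mdist X x x0 - b))"

definition morAt :: "'a metric \<Rightarrow> 'b metric \<Rightarrow> ('a \<Rightarrow> 'b) \<Rightarrow> bool" where
  "morAt X Y f \<longleftrightarrow> morA X Y f \<and> nonzero_norm X Y f"

definition halfline :: "real metric" where
  "halfline = submetric euclidean_metric {0..}"

end

theory Submission
  imports Defs
begin

lemma halfline_facts:
  "mspace halfline = {0..}" "mdist halfline = dist"
  "mtopology_of halfline = subtopology euclideanreal {0..}"
  by (simp_all add: halfline_def mtopology_of_submetric)

lemma compactin_metric_bounded:
  assumes "compactin (mtopology_of X) S"
  shows "\<exists>z B. S \<subseteq> mcball_of X z B"
proof -
  have "Metric_space.mbounded (mspace X) (mdist X) S"
    using Metric_space.compactin_imp_mbounded[OF Metric_space_mspace_mdist] assms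
    by (simp add: mtopology_of_def)
  then show ?thesis
    by (simp add: Metric_space.mbounded_def[OF Metric_space_mspace_mdist] mcball_of_def)
qed

lemma morA_halfline_intro:
  fixes \<psi> :: "'a \<Rightarrow> real"
  assumes prp: "proper_metric X"
    and cont: "continuous_map (mtopology_of X) euclideanreal \<psi>"
    and nonneg: "\<forall>x\<in>mspace X. \<psi> x \<ge> 0"
    and lip: "\<forall>x\<in>mspace X. \<forall>y\<in>mspace X. \<bar>\<psi> x - \<psi> y\<bar> \<le> L * mdist X x y + s"
    and Ls: "L \<ge> 0" "s \<ge> 0"
    and sub: "\<forall>R. \<exists>z r. \<forall>x\<in>mspace X. \<psi> x \<le> R \<longrightarrow> x \<in> mcball_of X z r"
  shows "morA X halfline \<psi>"
  unfolding morA_def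
proof (intro conjI)
  show c2: "continuous_map (mtopology_of X) (mtopology_of halfline) \<psi>"
    using cont nonneg by (auto simp: halfline_facts continuous_map_in_subtopology)
  show "asymp_lipschitz X halfline \<psi>"
    unfolding asymp_lipschitz_def using lip Ls by (auto simp: halfline_facts dist_real_def)
  show "proper_metric_map X halfline \<psi>"
    unfolding proper_metric_map_def
  proof (intro allI impI)
    fix K assume K: "compactin (mtopology_of halfline) K"
    then have cK: "compact K" "K \<subseteq> {0..}"
      by (auto simp: halfline_facts compactin_subtopology)
    then obtain R where R: "\<forall>k\<in>K. \<bar>k\<bar> \<le> R"
      using compact_imp_bounded bounded_real by blast
    define P where "P = {x \<in> mspace X. \<psi> x \<in> K}"
    have clP: "closedin (mtopology_of X) P"
      unfolding P_def
      using closedin_continuous_map_preimage[OF cont, of K] cK compact_imp_closed closed_closedin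
      by fastforce
    obtain z r where zr: "\<forall>x\<in>mspace X. \<psi> x \<le> R \<longrightarrow> x \<in> mcball_of X z r"
      using sub by blast
    show "compactin (mtopology_of X) {x \<in> mspace X. \<psi> x \<in> K}"
    proof (cases "P = {}")
      case True then show ?thesis unfolding P_def[symmetric] by simp
    next
      case False
      then obtain p where "p \<in> P" by blast
      then have "z \<in> mspace X" using zr R by (auto simp: P_def)
      then have cb: "compactin (mtopology_of X) (mcball_of X z r)"
        using prp by (simp add: proper_metric_def)
      have "P \<subseteq> mcball_of X z r" using zr R by (auto simp: P_def abs_le_iff)
      then show ?thesis using closed_compactin[OF cb _ clP] by (simp add: P_def)
    qed
  qed
qed

lemma nonzero_norm_halfline_intro:
  fixes \<psi> :: "'a \<Rightarrow> real"
  assumes nonneg: "\<forall>x\<in>mspace X. \<psi> x \<ge> 0"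
    and x1: "x1 \<in> mspace X" and c: "c > 0"
    and lb: "\<forall>x\<in>mspace X. \<psi> x \<ge> c * mdist X x x1 - b"
  shows "nonzero_norm X halfline \<psi>"
  unfolding nonzero_norm_def
proof (intro ballI)
  fix x0 y0 assume x0: "x0 \<in> mspace X" and y0: "y0 \<in> mspace halfline"
  define b' where "b' = max 0 (b + y0 + c * mdist X x1 x0)"
  have "\<forall>x\<in>mspace X. mdist halfline (\<psi> x) y0 \<ge> c * mdist X x x0 - b'"
  proof
    fix x assume x: "x \<in> mspace X"
    have t: "mdist X x x0 \<le> mdist X x x1 + mdist X x1 x0"
      by (rule mdist_triangle[OF x x1 x0])
    have m: "c * mdist X x x0 \<le> c * mdist X x x1 + c * mdist X x1 x0"
      using mult_left_mono[OF t, of c] c by (simp add: distrib_left)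
    have e: "mdist halfline (\<psi> x) y0 = \<bar>\<psi> x - y0\<bar>"
      by (simp add: halfline_facts dist_real_def)
    have l: "\<psi> x \<ge> c * mdist X x x1 - b" using lb x by blast
    have "b' \<ge> b + y0 + c * mdist X x1 x0" unfolding b'_def by simp
    then show "mdist halfline (\<psi> x) y0 \<ge> c * mdist X x x0 - b'"
      using m e l by linarith
  qed
  moreover have "b' \<ge> 0" unfolding b'_def by simp
  ultimately show "\<exists>c b. 0 < c \<and> 0 \<le> b \<and> (\<forall>x\<in>mspace X. c * mdist X x x0 - b \<le> mdist halfline (\<psi> x) y0)"
    using c by blast
qed

lemma morA_sub_unfold:
  fixes \<phi> :: "'a \<Rightarrow> real"
  assumes m: "morA (submetric X A) halfline \<phi>" and As: "A \<subseteq> mspace X"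
  shows "continuous_map (subtopology (mtopology_of X) A) euclideanreal \<phi>"
    and "\<forall>a\<in>A. \<phi> a \<ge> 0"
    and "\<exists>L s. L \<ge> 0 \<and> s \<ge> 0 \<and> (\<forall>a\<in>A. \<forall>a'\<in>A. \<bar>\<phi> a - \<phi> a'\<bar> \<le> L * mdist X a a' + s)"
    and "\<forall>R. \<exists>z B. \<forall>a\<in>A. \<phi> a \<le> R \<longrightarrow> a \<in> mcball_of X z B"
proof -
  have AI: "A \<inter> mspace X = A" using As by blast
  have c: "continuous_map (subtopology (mtopology_of X) A) (subtopology euclideanreal {0..}) \<phi>"
    using m by (simp add: morA_def mtopology_of_submetric halfline_facts)
  have tA: "topspace (subtopology (mtopology_of X) A) = A"
    using As by (simp add: topspace_subtopology AI inf_commute)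
  show "continuous_map (subtopology (mtopology_of X) A) euclideanreal \<phi>"
    using c by (simp add: continuous_map_in_subtopology)
  show nn: "\<forall>a\<in>A. \<phi> a \<ge> 0"
    using c tA by (auto simp: continuous_map_in_subtopology)
  show "\<exists>L s. L \<ge> 0 \<and> s \<ge> 0 \<and> (\<forall>a\<in>A. \<forall>a'\<in>A. \<bar>\<phi> a - \<phi> a'\<bar> \<le> L * mdist X a a' + s)"
    using m AI by (simp add: morA_def asymp_lipschitz_def halfline_facts dist_real_def)
  show "\<forall>R. \<exists>z B. \<forall>a\<in>A. \<phi> a \<le> R \<longrightarrow> a \<in> mcball_of X z B"
  proof
    fix R :: real
    have K: "compactin (mtopology_of halfline) {0..R}"
      by (simp add: halfline_facts compactin_subtopology)
    have "compactin (mtopology_of (submetric X A)) {x \<in> mspace (submetric X A). \<phi> x \<in> {0..R}}"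
      using m K unfolding morA_def proper_metric_map_def by blast
    then have "compactin (mtopology_of X) {x \<in> A. \<phi> x \<in> {0..R}}"
      using AI by (simp add: mtopology_of_submetric compactin_subtopology)
    then obtain z B where "{x \<in> A. \<phi> x \<in> {0..R}} \<subseteq> mcball_of X z B"
      using compactin_metric_bounded by blast
    then have "\<forall>a\<in>A. \<phi> a \<le> R \<longrightarrow> a \<in> mcball_of X z B" using nn by auto
    then show "\<exists>z B. \<forall>a\<in>A. \<phi> a \<le> R \<longrightarrow> a \<in> mcball_of X z B" by blast
  qed
qed

lemma extension_halfline:
  fixes \<phi> :: "'a \<Rightarrow> real"
  assumes clA: "closedin (mtopology_of X) A" and Ane: "A \<noteq> {}"
    and contf: "continuous_map (subtopology (mtopology_of X) A) euclideanreal \<phi>"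
    and nn: "\<forall>a\<in>A. \<phi> a \<ge> 0"
    and lip: "\<forall>a\<in>A. \<forall>a'\<in>A. \<bar>\<phi> a - \<phi> a'\<bar> \<le> L * mdist X a a' + s"
    and L0: "L \<ge> 0" and s0: "s \<ge> 0"
    and bnd: "\<forall>R. \<exists>z B. \<forall>a\<in>A. \<phi> a \<le> R \<longrightarrow> a \<in> mcball_of X z B"
  shows "\<exists>\<psi> L' s'. continuous_map (mtopology_of X) euclideanreal \<psi>
     \<and> (\<forall>x\<in>mspace X. \<psi> x \<ge> 0) \<and> (\<forall>a\<in>A. \<psi> a = \<phi> a) \<and> L' \<ge> 0 \<and> s' \<ge> 0
     \<and> (\<forall>x\<in>mspace X. \<forall>y\<in>mspace X. \<bar>\<psi> x - \<psi> y\<bar> \<le> L' * mdist X x y + s')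
     \<and> (\<forall>R. \<exists>z r. \<forall>x\<in>mspace X. \<psi> x \<le> R \<longrightarrow> x \<in> mcball_of X z r)
     \<and> (\<forall>a0 c b. a0 \<in> A \<longrightarrow> c > 0 \<longrightarrow> (\<forall>a\<in>A. \<phi> a \<ge> c * mdist X a a0 - b)
            \<longrightarrow> (\<exists>c'>0. \<forall>x\<in>mspace X. \<psi> x \<ge> c' * mdist X x a0 - b))"
proof -
  have As: "A \<subseteq> mspace X" using closedin_subset[OF clA] by simp
  define L1 where "L1 = max 1 L"
  have L1: "L1 \<ge> 1" "L1 \<ge> L" unfolding L1_def by auto
  define h where "h x = Inf ((\<lambda>a. \<phi> a + L1 * mdist X x a) ` A)" for x
  have bdd: "bdd_below ((\<lambda>a. \<phi> a + L1 * mdist X x a) ` A)" for x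
  proof (rule bdd_belowI[of _ 0])
    fix y assume "y \<in> (\<lambda>a. \<phi> a + L1 * mdist X x a) ` A"
    then obtain a where "a \<in> A" "y = \<phi> a + L1 * mdist X x a" by blast
    moreover have "L1 * mdist X x a \<ge> 0" using L1 by simp
    ultimately show "0 \<le> y" using nn by force
  qed
  have h_le: "h x \<le> \<phi> a + L1 * mdist X x a" if "a \<in> A" for x a
    unfolding h_def by (rule cInf_lower[OF _ bdd]) (use that in blast)
  have h_ge: "m \<le> h x" if "\<forall>a\<in>A. m \<le> \<phi> a + L1 * mdist X x a" for x m
    unfolding h_def by (rule cInf_greatest) (use that Ane in auto)
  have h_nn: "h x \<ge> 0" for x
  proof (rule h_ge, intro ballI)
    fix a assume "a \<in> A"
    moreover have "L1 * mdist X x a \<ge> 0" using L1 by simp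
    ultimately show "0 \<le> \<phi> a + L1 * mdist X x a" using nn by force
  qed
  have h_lip1: "h x \<le> h y + L1 * mdist X x y" if x: "x \<in> mspace X" and y: "y \<in> mspace X" for x y
  proof -
    have "h x - L1 * mdist X x y \<le> h y"
    proof (rule h_ge, intro ballI)
      fix a assume a: "a \<in> A"
      have t: "mdist X x a \<le> mdist X x y + mdist X y a"
        using mdist_triangle[OF x y] a As by blast
      have "L1 * mdist X x a \<le> L1 * mdist X x y + L1 * mdist X y a"
        using mult_left_mono[OF t, of L1] L1 by (simp add: distrib_left)
      then show "h x - L1 * mdist X x y \<le> \<phi> a + L1 * mdist X y a"
        using h_le[OF a, of x] by linarith
    qed
    then show ?thesis by linarith
  qed
  have h_lip: "\<bar>h x - h y\<bar> \<le> L1 * mdist X x y" if "x \<in> mspace X" "y \<in> mspace X" for x y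
    using h_lip1[OF that] h_lip1[OF that(2,1)] by (simp add: mdist_commute abs_le_iff)
  have "Lipschitz_continuous_map X euclidean_metric h"
    unfolding Lipschitz_continuous_map_def
    using h_lip by (auto simp: dist_real_def intro!: exI[of _ L1])
  then have h_cont: "continuous_map (mtopology_of X) euclideanreal h"
    using Lipschitz_continuous_imp_continuous_map by fastforce
  have hA: "\<phi> a - s \<le> h a \<and> h a \<le> \<phi> a" if a: "a \<in> A" for a
  proof
    have "a \<in> mspace X" using a As by blast
    then have "mdist X a a = 0" using mdist_zero[of a X a] by simp
    then show "h a \<le> \<phi> a" using h_le[OF a, of a] by simp
    show "\<phi> a - s \<le> h a"
    proof (rule h_ge, intro ballI)
      fix a' assume a': "a' \<in> A"
      have "L * mdist X a a' \<le> L1 * mdist X a a'"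
        using L1 by (simp add: mult_right_mono)
      moreover have "\<bar>\<phi> a - \<phi> a'\<bar> \<le> L * mdist X a a' + s" using lip a a' by blast
      ultimately show "\<phi> a - s \<le> \<phi> a' + L1 * mdist X a a'"
        by linarith
    qed
  qed
  have normal: "normal_space (mtopology_of X)"
    using Metric_space.normal_space_mtopology[OF Metric_space_mspace_mdist]
    by (simp add: mtopology_of_def)
  have fcont: "continuous_map (subtopology (mtopology_of X) A) euclideanreal (\<lambda>x. \<phi> x - h x)"
    using contf continuous_map_from_subtopology[OF h_cont] by (intro continuous_map_diff) auto
  have fim: "(\<lambda>x. \<phi> x - h x) ` A \<subseteq> {0..s}"
    using hA by force
  obtain g where g_cont: "continuous_map (mtopology_of X) euclideanreal g"
    and gA: "\<And>x. x \<in> A \<Longrightarrow> g x = \<phi> x - h x"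
    and gim: "g ` topspace (mtopology_of X) \<subseteq> {0..s}"
    using Tietze_extension_closed_real_interval[OF normal clA fcont fim s0] by blast
  have g01: "0 \<le> g x \<and> g x \<le> s" if "x \<in> mspace X" for x
    using gim that by auto
  define \<psi> where "\<psi> x = h x + g x" for x
  have c1: "continuous_map (mtopology_of X) euclideanreal \<psi>"
    unfolding \<psi>_def using h_cont g_cont by (intro continuous_map_add)
  have c2: "\<forall>x\<in>mspace X. \<psi> x \<ge> 0"
    using h_nn g01 unfolding \<psi>_def by (simp add: add_nonneg_nonneg)
  have c3: "\<forall>a\<in>A. \<psi> a = \<phi> a"
    using gA unfolding \<psi>_def by simp
  have c4: "\<forall>x\<in>mspace X. \<forall>y\<in>mspace X. \<bar>\<psi> x - \<psi> y\<bar> \<le> L1 * mdist X x y + s"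
  proof (intro ballI)
    fix x y assume x: "x \<in> mspace X" and y: "y \<in> mspace X"
    show "\<bar>\<psi> x - \<psi> y\<bar> \<le> L1 * mdist X x y + s"
      using h_lip[OF x y] g01[OF x] g01[OF y] unfolding \<psi>_def by (simp add: abs_le_iff)
  qed
  have c5: "\<forall>R. \<exists>z r. \<forall>x\<in>mspace X. \<psi> x \<le> R \<longrightarrow> x \<in> mcball_of X z r"
  proof
    fix R :: real
    obtain z B where zB: "\<forall>a\<in>A. \<phi> a \<le> R + 1 \<longrightarrow> a \<in> mcball_of X z B"
      using bnd by blast
    have "\<forall>x\<in>mspace X. \<psi> x \<le> R \<longrightarrow> x \<in> mcball_of X z (B + R + 1)"
    proof (intro ballI impI)
      fix x assume x: "x \<in> mspace X" and px: "\<psi> x \<le> R"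
      have hx: "h x \<le> R" using px g01[OF x] unfolding \<psi>_def by linarith
      obtain a where a: "a \<in> A" and lt: "\<phi> a + L1 * mdist X x a < R + 1"
      proof (rule ccontr)
        assume "\<not> thesis"
        then have "\<forall>a\<in>A. R + 1 \<le> \<phi> a + L1 * mdist X x a"
          using that by (meson not_le)
        then have "R + 1 \<le> h x" by (rule h_ge)
        then show False using hx by linarith
      qed
      have dnn: "L1 * mdist X x a \<ge> 0" using L1 by simp
      have "mdist X x a \<le> L1 * mdist X x a"
        using L1 mult_right_mono[of 1 L1 "mdist X x a"] by simp
      then have dxa: "mdist X x a \<le> R + 1" using lt nn a by force
      have "a \<in> mcball_of X z B" using zB a lt dnn by force
      then have zm: "z \<in> mspace X" and am: "a \<in> mspace X" and dza: "mdist X z a \<le> B" by auto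
      have "mdist X z x \<le> mdist X z a + mdist X a x"
        using mdist_triangle[OF zm am x] .
      then show "x \<in> mcball_of X z (B + R + 1)"
        using zm x dza dxa by (simp add: mdist_commute)
    qed
    then show "\<exists>z r. \<forall>x\<in>mspace X. \<psi> x \<le> R \<longrightarrow> x \<in> mcball_of X z r" by blast
  qed
  have c6: "\<forall>a0 c b. a0 \<in> A \<longrightarrow> c > 0 \<longrightarrow> (\<forall>a\<in>A. \<phi> a \<ge> c * mdist X a a0 - b)
            \<longrightarrow> (\<exists>c'>0. \<forall>x\<in>mspace X. \<psi> x \<ge> c' * mdist X x a0 - b)"
  proof (intro allI impI)
    fix a0 c b assume a0: "a0 \<in> A" and c: "c > 0" and lb: "\<forall>a\<in>A. \<phi> a \<ge> c * mdist X a a0 - b"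
    define c' where "c' = min c L1"
    have c': "c' > 0" "c' \<le> c" "c' \<le> L1" using c L1 unfolding c'_def by auto
    have "\<forall>x\<in>mspace X. \<psi> x \<ge> c' * mdist X x a0 - b"
    proof
      fix x assume x: "x \<in> mspace X"
      have "c' * mdist X x a0 - b \<le> h x"
      proof (rule h_ge, intro ballI)
        fix a assume a: "a \<in> A"
        have am: "a \<in> mspace X" and a0m: "a0 \<in> mspace X" using a a0 As by auto
        have t: "mdist X x a0 \<le> mdist X x a + mdist X a a0"
          using mdist_triangle[OF x am a0m] .
        have m1: "c' * mdist X x a0 \<le> c' * mdist X x a + c' * mdist X a a0"
          using mult_left_mono[OF t, of c'] c' by (simp add: distrib_left)
        have m2: "c' * mdist X x a \<le> L1 * mdist X x a"
          using c' by (simp add: mult_right_mono)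
        have m3: "c' * mdist X a a0 \<le> c * mdist X a a0"
          using c' by (simp add: mult_right_mono)
        show "c' * mdist X x a0 - b \<le> \<phi> a + L1 * mdist X x a"
          using m1 m2 m3 lb a by fastforce
      qed
      then show "\<psi> x \<ge> c' * mdist X x a0 - b"
        using g01[OF x] unfolding \<psi>_def by linarith
    qed
    then show "\<exists>c'>0. \<forall>x\<in>mspace X. \<psi> x \<ge> c' * mdist X x a0 - b"
      using c' by blast
  qed
  have "L1 \<ge> 0" using L1 by simp
  then show ?thesis using c1 c2 c3 c4 c5 c6 s0 by blast
qed

lemma empty_case:
  fixes X :: "'a metric"
  assumes prp: "proper_metric X"
  shows "\<exists>\<psi>. morAt X halfline \<psi>"
proof (cases "mspace X = {}")
  case True
  have "morA X halfline (\<lambda>x. 0)"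
    by (rule morA_halfline_intro[OF prp, of _ 0 0]) (use True in auto)
  moreover have "nonzero_norm X halfline (\<lambda>x. 0)"
    using True by (simp add: nonzero_norm_def)
  ultimately show ?thesis unfolding morAt_def by blast
next
  case False
  then obtain x0 where x0: "x0 \<in> mspace X" by blast
  have rt: "\<bar>mdist X x x0 - mdist X y x0\<bar> \<le> mdist X x y" if x: "x \<in> mspace X" and y: "y \<in> mspace X" for x y
    using mdist_triangle[OF x y x0] mdist_triangle[OF y x x0] mdist_commute[of X x y] by (simp add: abs_le_iff)
  have "Lipschitz_continuous_map X euclidean_metric (\<lambda>x. mdist X x x0)"
    unfolding Lipschitz_continuous_map_def
    using rt by (auto simp: dist_real_def intro!: exI[of _ 1])
  then have cont: "continuous_map (mtopology_of X) euclideanreal (\<lambda>x. mdist X x x0)"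
    using Lipschitz_continuous_imp_continuous_map by fastforce
  have sub: "\<forall>R. \<exists>z r. \<forall>x\<in>mspace X. mdist X x x0 \<le> R \<longrightarrow> x \<in> mcball_of X z r"
  proof
    fix R
    have "\<forall>x\<in>mspace X. mdist X x x0 \<le> R \<longrightarrow> x \<in> mcball_of X x0 R"
      using x0 by (simp add: mdist_commute)
    then show "\<exists>z r. \<forall>x\<in>mspace X. mdist X x x0 \<le> R \<longrightarrow> x \<in> mcball_of X z r" by blast
  qed
  have "morA X halfline (\<lambda>x. mdist X x x0)"
    by (rule morA_halfline_intro[OF prp cont _ _ _ _ sub, of 1 0]) (use rt in auto)
  moreover have "nonzero_norm X halfline (\<lambda>x. mdist X x x0)"
    by (rule nonzero_norm_halfline_intro[OF _ x0, of _ 1 0]) auto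
  ultimately show ?thesis unfolding morAt_def by blast
qed

theorem theorem4p1:
  fixes X :: "'a metric" and A :: "'a set" and \<phi> :: "'a \<Rightarrow> real"
  assumes "proper_metric X"
    and "closedin (mtopology_of X) A"
  shows "(morA (submetric X A) halfline \<phi> \<longrightarrow>
            (\<exists>\<psi>. morA X halfline \<psi> \<and> (\<forall>a\<in>A. \<psi> a = \<phi> a)))
       \<and> (morAt (submetric X A) halfline \<phi> \<longrightarrow>
            (\<exists>\<psi>. morAt X halfline \<psi> \<and> (\<forall>a\<in>A. \<psi> a = \<phi> a)))"
proof (cases "A = {}")
  case True
  obtain \<psi> where "morAt X halfline \<psi>" using empty_case[OF assms(1)] by blast
  then show ?thesis using True unfolding morAt_def by blast
next
  case Ane: False
  have As: "A \<subseteq> mspace X" using closedin_subset[OF assms(2)] by simp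
  have main: "\<exists>\<psi>. morA X halfline \<psi> \<and> (\<forall>a\<in>A. \<psi> a = \<phi> a)
     \<and> (nonzero_norm (submetric X A) halfline \<phi> \<longrightarrow> nonzero_norm X halfline \<psi>)"
    if m: "morA (submetric X A) halfline \<phi>"
  proof -
    note u = morA_sub_unfold[OF m As]
    obtain L s where Ls: "L \<ge> 0" "s \<ge> 0"
      "\<forall>a\<in>A. \<forall>a'\<in>A. \<bar>\<phi> a - \<phi> a'\<bar> \<le> L * mdist X a a' + s"
      using u(3) by blast
    obtain \<psi> L' s' where P: "continuous_map (mtopology_of X) euclideanreal \<psi>"
     "(\<forall>x\<in>mspace X. \<psi> x \<ge> 0)" "(\<forall>a\<in>A. \<psi> a = \<phi> a)" "L' \<ge> 0" "s' \<ge> 0"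
     "(\<forall>x\<in>mspace X. \<forall>y\<in>mspace X. \<bar>\<psi> x - \<psi> y\<bar> \<le> L' * mdist X x y + s')"
     "(\<forall>R. \<exists>z r. \<forall>x\<in>mspace X. \<psi> x \<le> R \<longrightarrow> x \<in> mcball_of X z r)"
     "(\<forall>a0 c b. a0 \<in> A \<longrightarrow> c > 0 \<longrightarrow> (\<forall>a\<in>A. \<phi> a \<ge> c * mdist X a a0 - b)
            \<longrightarrow> (\<exists>c'>0. \<forall>x\<in>mspace X. \<psi> x \<ge> c' * mdist X x a0 - b))"
      using extension_halfline[OF assms(2) Ane u(1) u(2) Ls(3) Ls(1) Ls(2) u(4)] by blast
    have mA: "morA X halfline \<psi>"
      using morA_halfline_intro[OF assms(1) P(1) P(2) P(6) P(4) P(5) P(7)] .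
    have "nonzero_norm X halfline \<psi>" if nz: "nonzero_norm (submetric X A) halfline \<phi>"
    proof -
      obtain a0 where a0: "a0 \<in> A" using Ane by blast
      have a0m: "a0 \<in> mspace (submetric X A)" using a0 As by auto
      have y0: "(0::real) \<in> mspace halfline" by (simp add: halfline_facts)
      obtain c b where cb: "c > 0" "\<forall>x\<in>mspace (submetric X A). mdist halfline (\<phi> x) 0 \<ge> c * mdist (submetric X A) x a0 - b"
        using nz a0m y0 unfolding nonzero_norm_def by blast
      have "\<forall>a\<in>A. \<phi> a \<ge> c * mdist X a a0 - b"
      proof
        fix a assume a: "a \<in> A"
        then have "a \<in> mspace (submetric X A)" using As by auto
        then have "mdist halfline (\<phi> a) 0 \<ge> c * mdist X a a0 - b" using cb by simp
        then show "\<phi> a \<ge> c * mdist X a a0 - b"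
          using u(2) a by (simp add: halfline_facts)
      qed
      then obtain c' where "c' > 0" "\<forall>x\<in>mspace X. \<psi> x \<ge> c' * mdist X x a0 - b"
        using P(8) a0 cb(1) by blast
      then show ?thesis
        using nonzero_norm_halfline_intro[OF P(2), of a0 c' b] a0 As by blast
    qed
    then show ?thesis using mA P(3) by blast
  qed
  show ?thesis
  proof (intro conjI impI)
    assume "morA (submetric X A) halfline \<phi>"
    then show "\<exists>\<psi>. morA X halfline \<psi> \<and> (\<forall>a\<in>A. \<psi> a = \<phi> a)" using main by blast
  next
    assume "morAt (submetric X A) halfline \<phi>"
    then show "\<exists>\<psi>. morAt X halfline \<psi> \<and> (\<forall>a\<in>A. \<psi> a = \<phi> a)"
      using main unfolding morAt_def by blast
  qed
qed

end
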